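(* Let $c,\ell,N\in\mathbb{N}_+$ and let the maximum pooling layer map $w^{i-1}=(w^{i-1}_1,\dots,w^{i-1}_{\ell N})$, $w^{i-1}_m\in\mathbb{R}^c$, to $w^i=(w^i_1,\dots,w^i_N)$ with $w^i_k=\max_{j=1,\dots,\ell}w^{i-1}_{\ell(k-1)+j}$, the maximum taken entrywise (channel-wise). Let $\Sigma\in\mathbb{R}^{c\times c}$ be diagonal and positive definite. Then for all inputs $w^{i-1}_a,w^{i-1}_b$ and every $k=1,\dots,N$, $$-(w^i_{a,k}-w^i_{b,k})^\top\Sigma(w^i_{a,k}-w^i_{b,k})+\sum_{j=1}^{\ell}\big(w^{i-1}_{a,\ell(k-1)+j}-w^{i-1}_{b,\ell(k-1)+j}\big)^\top\Sigma\big(w^{i-1}_{a,\ell(k-1)+j}-w^{i-1}_{b,\ell(k-1)+j}\big)\ge 0.$$ Consequently, with $\underline{w}$ denoting the column-wise stacked vector, the layer satisfies $$\begin{bmatrix}\underline{w}_a^i-\underline{w}_b^i\\ \underline{w}_a^{i-1}-\underline{w}_b^{i-1}\end{bmatrix}^\top\begin{bmatrix}Q & 0\\ 0 & R\end{bmatrix}\begin{bmatrix}\underline{w}_a^i-\underline{w}_b^i\\ \underline{w}_a^{i-1}-\underline{w}_b^{i-1}\end{bmatrix}\ge0$$ for all inputs, with $Q=-\mathrm{blkdiag}(\Sigma,\dots,\Sigma)$ ($N$ blocks) and $R=\mathrm{blkdiag}(\Sigma,\dots,\Sigma)$ ($\ell N$ blocks).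
   Context: For a sequence $w=(w_1,\dots,w_M)$ of vectors in $\mathbb{R}^c$, the column-wise stacked vector is $\underline{w}=(w_1^\top,\dots,w_M^\top)^\top$. *)

theory Defs
  imports Complex_Main
begin

text \<open>Conventions (0-indexed). A sequence of M vectors in R^c is a function
  w :: nat \<Rightarrow> nat \<Rightarrow> real, where w m r is channel r (r < c) of vector m (m < M).
  Vectors in R^n are functions nat \<Rightarrow> real, only entries i < n matter.\<close>

definition quad_form :: "nat \<Rightarrow> (nat \<Rightarrow> nat \<Rightarrow> real) \<Rightarrow> (nat \<Rightarrow> real) \<Rightarrow> real" where
  "quad_form n A x = (\<Sum>i<n. \<Sum>j<n. x i * A i j * x j)"

definition diagonal_mat :: "nat \<Rightarrow> (nat \<Rightarrow> nat \<Rightarrow> real) \<Rightarrow> bool" where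
  "diagonal_mat n A \<longleftrightarrow> (\<forall>i<n. \<forall>j<n. i \<noteq> j \<longrightarrow> A i j = 0)"

definition symmetric_mat :: "nat \<Rightarrow> (nat \<Rightarrow> nat \<Rightarrow> real) \<Rightarrow> bool" where
  "symmetric_mat n A \<longleftrightarrow> (\<forall>i<n. \<forall>j<n. A i j = A j i)"

definition pos_def :: "nat \<Rightarrow> (nat \<Rightarrow> nat \<Rightarrow> real) \<Rightarrow> bool" where
  "pos_def n A \<longleftrightarrow> symmetric_mat n A \<and>
     (\<forall>x. (\<exists>i<n. x i \<noteq> 0) \<longrightarrow> quad_form n A x > 0)"

definition maxpool :: "nat \<Rightarrow> (nat \<Rightarrow> nat \<Rightarrow> real) \<Rightarrow> (nat \<Rightarrow> nat \<Rightarrow> real)" where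
  "maxpool l w = (\<lambda>k r. Max {w (l * k + j) r | j. j < l})"

definition stack :: "nat \<Rightarrow> (nat \<Rightarrow> nat \<Rightarrow> real) \<Rightarrow> (nat \<Rightarrow> real)" where
  "stack c w = (\<lambda>i. w (i div c) (i mod c))"

text \<open>blkdiag(S,...,S) with blocks of size c (number of blocks determined by the
  ambient dimension in which it is used).\<close>
definition blkdiag :: "nat \<Rightarrow> (nat \<Rightarrow> nat \<Rightarrow> real) \<Rightarrow> (nat \<Rightarrow> nat \<Rightarrow> real)" where
  "blkdiag c S = (\<lambda>i j. if i div c = j div c then S (i mod c) (j mod c) else 0)"

definition blk2 :: "nat \<Rightarrow> (nat \<Rightarrow> nat \<Rightarrow> real) \<Rightarrow> (nat \<Rightarrow> nat \<Rightarrow> real) \<Rightarrow> (nat \<Rightarrow> nat \<Rightarrow> real)" where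
  "blk2 n A B = (\<lambda>i j. if i < n \<and> j < n then A i j
                      else if n \<le> i \<and> n \<le> j then B (i - n) (j - n) else 0)"

definition vcat :: "nat \<Rightarrow> (nat \<Rightarrow> real) \<Rightarrow> (nat \<Rightarrow> real) \<Rightarrow> (nat \<Rightarrow> real)" where
  "vcat n x y = (\<lambda>i. if i < n then x i else y (i - n))"

end

theory Submission
  imports Defs
begin

lemma diag_qf:
  assumes "diagonal_mat n A"
  shows "quad_form n A x = (\<Sum>i<n. A i i * (x i)^2)"
  unfolding quad_form_def
proof (rule sum.cong[OF refl])
  fix i assume i: "i \<in> {..<n}"
  have "(\<Sum>j<n. x i * A i j * x j) = (\<Sum>j<n. if j = i then x i * A i i * x i else 0)"
    using assms i unfolding diagonal_mat_def by (intro sum.cong) auto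
  also have "\<dots> = A i i * (x i)^2" using i by (simp add: power2_eq_square)
  finally show "(\<Sum>j<n. x i * A i j * x j) = A i i * (x i)^2" .
qed

lemma sum_split_add:
  fixes a b :: nat
  shows "(\<Sum>i<a+b. f i) = (\<Sum>i<a. f i) + (\<Sum>j<b. (f (a+j)::real))"
  by (induction b) (simp_all add: add_ac)

lemma sum_blocks:
  fixes c M :: nat
  shows "(\<Sum>i<c*M. f i) = (\<Sum>m<M. \<Sum>r<c. (f (c*m+r)::real))"
proof (induction M)
  case 0 then show ?case by simp
next
  case (Suc M)
  have "c * Suc M = c*M + c" by simp
  then show ?case using Suc by (simp only: sum_split_add) simp
qed

lemma max_diff:
  fixes a b :: "nat \<Rightarrow> real"
  assumes "l > 0"
  shows "(Max {a j |j. j < l} - Max {b j |j. j < l})^2 \<le> (\<Sum>j<l. (a j - b j)^2)"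
proof -
  have ea: "{a j |j. j < l} = a ` {..<l}" and eb: "{b j |j. j < l} = b ` {..<l}" by auto
  have ne: "{..<l} \<noteq> {}" using assms by auto
  define Ma where "Ma = Max (a ` {..<l})"
  define Mb where "Mb = Max (b ` {..<l})"
  have "\<exists>j<l. (Ma - Mb)^2 \<le> (a j - b j)^2"
  proof (cases "Ma \<ge> Mb")
    case True
    have "Ma \<in> a ` {..<l}" using Max_in[of "a ` {..<l}"] ne unfolding Ma_def by auto
    then obtain j where j: "j < l" "Ma = a j" by auto
    have "b j \<le> Mb" unfolding Mb_def using j by (intro Max_ge) auto
    then have "(Ma - Mb)^2 \<le> (a j - b j)^2" using True j
      by (intro power_mono) auto
    then show ?thesis using j by blast
  next
    case False
    have "Mb \<in> b ` {..<l}" using Max_in[of "b ` {..<l}"] ne unfolding Mb_def by auto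
    then obtain j where j: "j < l" "Mb = b j" by auto
    have "a j \<le> Ma" unfolding Ma_def using j by (intro Max_ge) auto
    then have "(Mb - Ma)^2 \<le> (b j - a j)^2" using False j
      by (intro power_mono) auto
    then have "(Ma - Mb)^2 \<le> (a j - b j)^2" by (simp add: power2_commute)
    then show ?thesis using j by blast
  qed
  then obtain j where j: "j < l" "(Ma - Mb)^2 \<le> (a j - b j)^2" by blast
  note j(2)
  also have "(a j - b j)^2 \<le> (\<Sum>j<l. (a j - b j)^2)"
    using j(1) by (intro member_le_sum) auto
  finally show ?thesis unfolding ea eb Ma_def Mb_def .
qed

theorem lemma9:
  fixes c l N :: nat
    and \<Sigma> :: "nat \<Rightarrow> nat \<Rightarrow> real"
  assumes "c > 0" and "l > 0" and "N > 0"
    and "diagonal_mat c \<Sigma>" and "pos_def c \<Sigma>"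
  shows "(\<forall>wa wb :: nat \<Rightarrow> nat \<Rightarrow> real. \<forall>k<N.
            - quad_form c \<Sigma> (\<lambda>r. maxpool l wa k r - maxpool l wb k r)
            + (\<Sum>j<l. quad_form c \<Sigma> (\<lambda>r. wa (l * k + j) r - wb (l * k + j) r)) \<ge> 0)
       \<and> (\<forall>wa wb :: nat \<Rightarrow> nat \<Rightarrow> real.
            quad_form (c * N + c * (l * N))
              (blk2 (c * N) (\<lambda>i j. - blkdiag c \<Sigma> i j) (blkdiag c \<Sigma>))
              (vcat (c * N)
                 (\<lambda>i. stack c (maxpool l wa) i - stack c (maxpool l wb) i)
                 (\<lambda>i. stack c wa i - stack c wb i)) \<ge> 0)"
proof -
  have pos: "\<Sigma> r r > 0" if r: "r < c" for r
  proof -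
    let ?x = "\<lambda>i. if i = r then 1 else (0::real)"
    have "quad_form c \<Sigma> ?x > 0" using assms(5) r unfolding pos_def_def by auto
    moreover have "quad_form c \<Sigma> ?x = (\<Sum>i<c. if i = r then \<Sigma> r r else 0)"
      unfolding diag_qf[OF assms(4)] by (intro sum.cong) auto
    ultimately show ?thesis using r by simp
  qed
  have P1: "- quad_form c \<Sigma> (\<lambda>r. maxpool l wa k r - maxpool l wb k r)
            + (\<Sum>j<l. quad_form c \<Sigma> (\<lambda>r. wa (l * k + j) r - wb (l * k + j) r)) \<ge> 0"
    for wa wb :: "nat \<Rightarrow> nat \<Rightarrow> real" and k
  proof -
    have "(\<Sum>j<l. quad_form c \<Sigma> (\<lambda>r. wa (l * k + j) r - wb (l * k + j) r))
        = (\<Sum>r<c. \<Sigma> r r * (\<Sum>j<l. (wa (l * k + j) r - wb (l * k + j) r)^2))"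
      unfolding diag_qf[OF assms(4)] by (simp add: sum_distrib_left sum.swap[of _ "{..<l}"])
    moreover have "quad_form c \<Sigma> (\<lambda>r. maxpool l wa k r - maxpool l wb k r)
        \<le> (\<Sum>r<c. \<Sigma> r r * (\<Sum>j<l. (wa (l * k + j) r - wb (l * k + j) r)^2))"
      unfolding diag_qf[OF assms(4)]
    proof (intro sum_mono mult_left_mono)
      fix r assume "r \<in> {..<c}"
      then show "0 \<le> \<Sigma> r r" using pos by (simp add: less_imp_le)
      show "(maxpool l wa k r - maxpool l wb k r)\<^sup>2 \<le> (\<Sum>j<l. (wa (l * k + j) r - wb (l * k + j) r)\<^sup>2)"
        unfolding maxpool_def using max_diff[OF assms(2), of "\<lambda>j. wa (l*k+j) r" "\<lambda>j. wb (l*k+j) r"]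
        by simp
    qed
    ultimately show ?thesis by linarith
  qed
  have stk: "stack c w (c*m + r) = w m r" if "r < c" for w :: "nat \<Rightarrow> nat \<Rightarrow> real" and m r
    using that unfolding stack_def by simp
  have P2: "quad_form (c * N + c * (l * N))
              (blk2 (c * N) (\<lambda>i j. - blkdiag c \<Sigma> i j) (blkdiag c \<Sigma>))
              (vcat (c * N)
                 (\<lambda>i. stack c (maxpool l wa) i - stack c (maxpool l wb) i)
                 (\<lambda>i. stack c wa i - stack c wb i)) \<ge> 0"
    for wa wb :: "nat \<Rightarrow> nat \<Rightarrow> real"
  proof -
    let ?B = "blk2 (c * N) (\<lambda>i j. - blkdiag c \<Sigma> i j) (blkdiag c \<Sigma>)"
    have dB: "diagonal_mat (c * N + c * (l * N)) ?B"
      unfolding diagonal_mat_def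
    proof (intro allI impI)
      fix i j assume "i < c * N + c * (l * N)" "j < c * N + c * (l * N)" "i \<noteq> j"
      have "blkdiag c \<Sigma> i' j' = 0" if "i' \<noteq> j'" for i' j'
      proof (cases "i' div c = j' div c")
        case True
        then have "i' mod c \<noteq> j' mod c" using that div_mod_decomp[of i' c] div_mod_decomp[of j' c] by metis
        then show ?thesis using True assms(4) assms(1) unfolding blkdiag_def diagonal_mat_def by simp
      qed (simp add: blkdiag_def)
      note bz = this
      show "?B i j = 0"
      proof (cases "i < c * N \<and> j < c * N")
        case True then show ?thesis using bz[OF \<open>i \<noteq> j\<close>] unfolding blk2_def by simp
      next
        case F: False
        show ?thesis
        proof (cases "c * N \<le> i \<and> c * N \<le> j")
          case True
          then have "i - c * N \<noteq> j - c * N" using \<open>i \<noteq> j\<close> by linarith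
          then show ?thesis using True F bz unfolding blk2_def by simp
        next
          case False then show ?thesis using F unfolding blk2_def by (simp only: F False if_False)
        qed
      qed
    qed
    define Q where "Q m = quad_form c \<Sigma> (\<lambda>r. maxpool l wa m r - maxpool l wb m r)" for m
    define R where "R m = quad_form c \<Sigma> (\<lambda>r. wa m r - wb m r)" for m
    define v where "v = vcat (c * N)
                 (\<lambda>i. stack c (maxpool l wa) i - stack c (maxpool l wb) i)
                 (\<lambda>i. stack c wa i - stack c wb i)"
    have A1: "(\<Sum>i<c*N. ?B i i * (v i)^2) = (\<Sum>m<N. - Q m)"
      unfolding sum_blocks Q_def diag_qf[OF assms(4)]
    proof (intro sum.cong refl)
      fix m assume m: "m \<in> {..<N}"
      have "(\<Sum>r<c. ?B (c*m+r) (c*m+r) * (v (c*m+r))^2)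
          = (\<Sum>r<c. - (\<Sigma> r r * (maxpool l wa m r - maxpool l wb m r)^2))"
      proof (intro sum.cong refl)
        fix r assume r: "r \<in> {..<c}"
        have lt: "c*m+r < c*N"
        proof -
          have "c*m+r < c*m+c" using r by simp
          also have "c*m+c = c*(m+1)" by simp
          also have "c*(m+1) \<le> c*N" using m by (intro mult_le_mono2) simp
          finally show ?thesis .
        qed
        show "?B (c*m+r) (c*m+r) * (v (c*m+r))^2 = - (\<Sigma> r r * (maxpool l wa m r - maxpool l wb m r)^2)"
          using lt r unfolding blk2_def blkdiag_def v_def vcat_def by (simp add: stk)
      qed
      then show "(\<Sum>r<c. ?B (c*m+r) (c*m+r) * (v (c*m+r))^2)
          = - (\<Sum>r<c. \<Sigma> r r * (maxpool l wa m r - maxpool l wb m r)^2)"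
        by (simp add: sum_negf)
    qed
    have A2: "(\<Sum>j<c*(l*N). ?B (c*N+j) (c*N+j) * (v (c*N+j))^2) = (\<Sum>m<l*N. R m)"
      unfolding sum_blocks R_def diag_qf[OF assms(4)]
      by (intro sum.cong refl) (simp add: blk2_def blkdiag_def v_def vcat_def stk)
    have "quad_form (c * N + c * (l * N)) ?B v = (\<Sum>m<N. - Q m) + (\<Sum>m<l*N. R m)"
      unfolding diag_qf[OF dB] sum_split_add A1 A2 by simp
    also have "(\<Sum>m<l*N. R m) = (\<Sum>k<N. \<Sum>j<l. R (l*k+j))"
      by (rule sum_blocks)
    also have "(\<Sum>m<N. - Q m) + \<dots> = (\<Sum>k<N. - Q k + (\<Sum>j<l. R (l*k+j)))"
      by (simp only: sum.distrib[symmetric])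
    also have "\<dots> \<ge> 0"
      using P1 unfolding Q_def R_def by (intro sum_nonneg) auto
    finally show ?thesis unfolding v_def by simp
  qed
  show ?thesis using P1 P2 by blast
qed

end
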